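(* For every $\varepsilon>0$ there exists a connected graph $G=(V,E)$ such that the generic submodularity ratio $\gamma$ of the set function $g:2^V\to\mathbb{R}_{\ge 0}$, $g(\emptyset)=0$, $g(S)=1/f(S)$ for $S\ne\emptyset$, satisfies $\gamma<\varepsilon$. (The same holds for any positive constant multiple of $g$.)
   Context: Graphs are finite, undirected, unweighted, without self-loops, connected; $f(S)=\sum_{u\in V}\min_{s\in S}\mathrm{dist}(u,s)$ is the group farness. For a set function $g$ on $2^U$, the marginal gain is $\Delta(e\mid A)=g(A\cup\{e\})-g(A)$. For a non-negative monotone set function $g$, its generic submodularity ratio $\gamma\in[0,1]$ is the largest scalar such that $\Delta(e\mid A)\ge\gamma\,\Delta(e\mid B)$ for all $A\subseteq B\subseteq U$ and all $e\in U\setminus B$; $\gamma=1$ iff $g$ is submodular. *)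

theory Defs
  imports Complex_Main
begin

definition simple_graph :: "'a set \<Rightarrow> ('a \<Rightarrow> 'a \<Rightarrow> bool) \<Rightarrow> bool" where
  "simple_graph V E \<longleftrightarrow> finite V \<and>
     (\<forall>u v. E u v \<longrightarrow> u \<in> V \<and> v \<in> V) \<and>
     (\<forall>u v. E u v \<longrightarrow> E v u) \<and> (\<forall>u. \<not> E u u)"

definition is_walk :: "'a set \<Rightarrow> ('a \<Rightarrow> 'a \<Rightarrow> bool) \<Rightarrow> 'a \<Rightarrow> 'a \<Rightarrow> nat \<Rightarrow> bool" where
  "is_walk V E u v n \<longleftrightarrow> (\<exists>xs. length xs = Suc n \<and> hd xs = u \<and> last xs = v \<and> set xs \<subseteq> V \<and>
      (\<forall>i < n. E (xs ! i) (xs ! Suc i)))"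

definition connected_graph :: "'a set \<Rightarrow> ('a \<Rightarrow> 'a \<Rightarrow> bool) \<Rightarrow> bool" where
  "connected_graph V E \<longleftrightarrow> V \<noteq> {} \<and> (\<forall>u\<in>V. \<forall>v\<in>V. \<exists>n. is_walk V E u v n)"

definition gdist :: "'a set \<Rightarrow> ('a \<Rightarrow> 'a \<Rightarrow> bool) \<Rightarrow> 'a \<Rightarrow> 'a \<Rightarrow> nat" where
  "gdist V E u v = (LEAST n. is_walk V E u v n)"

definition farness :: "'a set \<Rightarrow> ('a \<Rightarrow> 'a \<Rightarrow> bool) \<Rightarrow> 'a set \<Rightarrow> nat" where
  "farness V E S = (\<Sum>u\<in>V. Min ((\<lambda>s. gdist V E u s) ` S))"

definition gfun :: "'a set \<Rightarrow> ('a \<Rightarrow> 'a \<Rightarrow> bool) \<Rightarrow> 'a set \<Rightarrow> real" where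
  "gfun V E S = (if S = {} then 0 else 1 / real (farness V E S))"

text \<open>Pairs with B \<union> {e} = U are excluded, since f(U) = 0 and g(U) = 1/f(U) is undefined.\<close>

definition gen_sub_ratio :: "'a set \<Rightarrow> ('a set \<Rightarrow> real) \<Rightarrow> real" where
  "gen_sub_ratio U h = Sup {\<gamma>. 0 \<le> \<gamma> \<and> \<gamma> \<le> 1 \<and>
     (\<forall>A B e. A \<subseteq> B \<longrightarrow> B \<subseteq> U \<longrightarrow> e \<in> U - B \<longrightarrow> insert e B \<noteq> U \<longrightarrow>
        h (insert e A) - h A \<ge> \<gamma> * (h (insert e B) - h B))}"

end

theory Submission
  imports Defs
begin

definition KV :: "nat \<Rightarrow> nat set" where "KV n = {0..<n}"
definition KE :: "nat \<Rightarrow> nat \<Rightarrow> nat \<Rightarrow> bool" where "KE n u v = (u \<noteq> v \<and> u < n \<and> v < n)"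

lemma walk0: "u \<in> KV n \<Longrightarrow> is_walk (KV n) (KE n) u u 0"
  unfolding is_walk_def by (rule exI[of _ "[u]"]) auto

lemma walk1: "u \<in> KV n \<Longrightarrow> v \<in> KV n \<Longrightarrow> u \<noteq> v \<Longrightarrow> is_walk (KV n) (KE n) u v 1"
  unfolding is_walk_def
  by (rule exI[of _ "[u,v]"]) (auto simp: KE_def KV_def less_Suc_eq)

lemma walk0D: "is_walk V E u v 0 \<Longrightarrow> u = v"
  unfolding is_walk_def by (auto simp: length_Suc_conv)

lemma gdist_K: assumes "u \<in> KV n" "v \<in> KV n"
  shows "gdist (KV n) (KE n) u v = (if u = v then 0 else 1)"
proof (cases "u = v")
  case True then show ?thesis unfolding gdist_def using walk0[OF assms(1)]
    by (metis Least_eq_0)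
next
  case False
  have "(LEAST m. is_walk (KV n) (KE n) u v m) = 1"
  proof (rule Least_equality)
    show "is_walk (KV n) (KE n) u v 1" using walk1 assms False by auto
    fix y assume "is_walk (KV n) (KE n) u v y"
    then show "1 \<le> y" using walk0D[of "KV n" "KE n" u v] False by (cases y) auto
  qed
  then show ?thesis using False unfolding gdist_def by simp
qed

lemma farness_K: assumes "S \<subseteq> KV n" "S \<noteq> {}"
  shows "farness (KV n) (KE n) S = card (KV n - S)"
proof -
  have fS: "finite S" using assms(1) finite_subset by (auto simp: KV_def)
  have "Min ((\<lambda>s. gdist (KV n) (KE n) u s) ` S) = (if u \<in> S then 0 else 1)" if u: "u \<in> KV n" for u
  proof (cases "u \<in> S")
    case True
    have "gdist (KV n) (KE n) u u = 0" using gdist_K u by simp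
    then have "0 \<in> (\<lambda>s. gdist (KV n) (KE n) u s) ` S" using True by force
    then show ?thesis using True fS by (simp add: Min_eqI)
  next
    case False
    have all: "gdist (KV n) (KE n) u s = 1" if "s \<in> S" for s
    proof -
      have "s \<in> KV n" using assms(1) that by auto
      then show ?thesis using False gdist_K[OF u, of s] that by auto
    qed
    have "(\<lambda>s. gdist (KV n) (KE n) u s) ` S = (\<lambda>s. 1) ` S"
      by (rule image_cong) (auto simp: all)
    also have "\<dots> = {1}" using assms(2) by auto
    finally have "(\<lambda>s. gdist (KV n) (KE n) u s) ` S = {1}" .
    then show ?thesis using False by simp
  qed
  then have "farness (KV n) (KE n) S = (\<Sum>u\<in>KV n. (if u \<in> S then 0 else 1))"
    unfolding farness_def by (intro sum.cong) auto
  also have "\<dots> = card (KV n - S)"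
    by (simp add: sum.If_cases KV_def Diff_eq)
  finally show ?thesis .
qed

lemma gfun_K: assumes "S \<subseteq> KV n" "S \<noteq> {}"
  shows "gfun (KV n) (KE n) S = 1 / real (card (KV n - S))"
  using farness_K[OF assms] assms unfolding gfun_def by simp

lemma gfun_nonneg: "gfun V E S \<ge> 0"
  unfolding gfun_def by auto

lemma ratio_bound:
  fixes c :: real
  assumes n: "n \<ge> 3" and c: "c > 0"
  shows "gen_sub_ratio (KV n) (\<lambda>S. c * gfun (KV n) (KE n) S) \<le> 2 / (real n - 1)"
proof -
  let ?h = "\<lambda>S. c * gfun (KV n) (KE n) S"
  let ?G = "{\<gamma>. 0 \<le> \<gamma> \<and> \<gamma> \<le> 1 \<and>
     (\<forall>A B e. A \<subseteq> B \<longrightarrow> B \<subseteq> KV n \<longrightarrow> e \<in> KV n - B \<longrightarrow> insert e B \<noteq> KV n \<longrightarrow>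
        ?h (insert e A) - ?h A \<ge> \<gamma> * (?h (insert e B) - ?h B))}"
  have fin: "finite (KV n)" by (simp add: KV_def)
  have zero: "0 \<in> ?G"
  proof (clarsimp)
    fix A B e assume AB: "A \<subseteq> B" "B \<subseteq> KV n" "e \<in> KV n" "e \<notin> B" "insert e B \<noteq> KV n"
    show "c * gfun (KV n) (KE n) A \<le> c * gfun (KV n) (KE n) (insert e A)"
    proof (cases "A = {}")
      case True then show ?thesis using c gfun_nonneg by (simp add: gfun_def)
    next
      case False
      have eA: "e \<notin> A" using AB by auto
      have sub: "insert e A \<subseteq> KV n" using AB by auto
      have "card (KV n - insert e B) > 0"
      proof -
        have "insert e B \<subseteq> KV n" using AB by auto
        then have "KV n - insert e B \<noteq> {}" using AB(5) by blast
        then show ?thesis using fin by (simp add: card_gt_0_iff)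
      qed
      moreover have "card (KV n - insert e B) \<le> card (KV n - insert e A)"
        using AB fin by (intro card_mono) auto
      moreover have "card (KV n - A) = Suc (card (KV n - insert e A))"
      proof -
        have "KV n - insert e A = (KV n - A) - {e}" by auto
        moreover have "e \<in> KV n - A" using AB eA by auto
        ultimately show ?thesis using fin card_Suc_Diff1[of "KV n - A" e] by simp
      qed
      ultimately have "1 / real (card (KV n - A)) \<le> 1 / real (card (KV n - insert e A))"
        by (intro divide_left_mono) auto
      then have "c * (1 / real (card (KV n - A))) \<le> c * (1 / real (card (KV n - insert e A)))"
        using c by (intro mult_left_mono) auto
      moreover have "A \<subseteq> KV n" using AB by auto
      ultimately show ?thesis using gfun_K[OF sub] gfun_K[of A n] False by simp
    qed
  qed
  have bnd: "\<gamma> \<le> 2 / (real n - 1)" if g: "\<gamma> \<in> ?G" for \<gamma>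
  proof -
    define B where "B = {2..<n}"
    have one: "(1::nat) \<in> KV n" "(1::nat) \<notin> insert 0 B" using n by (auto simp: B_def KV_def)
    have B4: "insert 0 B \<noteq> KV n" using one by blast
    have B23: "B \<subseteq> KV n" "(0::nat) \<in> KV n - B"
      using n by (auto simp: B_def KV_def)
    note B = empty_subsetI B23 B4
    have gall: "\<forall>A B e. A \<subseteq> B \<longrightarrow> B \<subseteq> KV n \<longrightarrow> e \<in> KV n - B \<longrightarrow> insert e B \<noteq> KV n \<longrightarrow>
        ?h (insert e A) - ?h A \<ge> \<gamma> * (?h (insert e B) - ?h B)"
      using g unfolding mem_Collect_eq by (rule conjunct2[OF conjunct2])
    have ineq: "?h (insert 0 {}) - ?h {} \<ge> \<gamma> * (?h (insert 0 B) - ?h B)"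
      using gall[rule_format, OF B] .
    have c1: "KV n - {0} = {1..<n}" by (auto simp: KV_def)
    have c2: "KV n - insert 0 B = {1}" using n by (auto simp: KV_def B_def)
    have c3: "KV n - B = {0,1}" using n by (auto simp: KV_def B_def)
    have Bne: "B \<noteq> {}" using n by (auto simp: B_def)
    have e1: "?h (insert 0 {}) - ?h {} = c / (real n - 1)"
      using gfun_K[of "{0}" n] B23 c1 n by (simp add: gfun_def[of _ _ "{}"] of_nat_diff)
    have e2: "?h (insert 0 B) - ?h B = c / 2"
    proof -
      have "gfun (KV n) (KE n) (insert 0 B) = 1" using gfun_K[of "insert 0 B" n] B23 c2 by simp
      moreover have "gfun (KV n) (KE n) B = 1/2" using gfun_K[of B n] B23 c3 Bne by simp
      ultimately show ?thesis by simp
    qed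
    have "\<gamma> * (c / 2) \<le> c / (real n - 1)" using ineq unfolding e1 e2 .
    then have "(\<gamma> * c) / 2 \<le> c / (real n - 1)" by simp
    then have "\<gamma> * c \<le> 2 * c / (real n - 1)" by (simp add: mult.commute)
    then have "\<gamma> * c \<le> (2 / (real n - 1)) * c" by simp
    then show ?thesis using c by (rule mult_right_le_imp_le)
  qed
  show ?thesis unfolding gen_sub_ratio_def
  proof (rule cSup_least)
    show "?G \<noteq> {}" using zero by blast
    show "\<And>x. x \<in> ?G \<Longrightarrow> x \<le> 2 / (real n - 1)" by (rule bnd)
  qed
qed

theorem mainTheorem5:
  fixes \<epsilon> c :: real
  assumes "\<epsilon> > 0" and "c > 0"
  shows "\<exists>(V :: nat set) E. simple_graph V E \<and> connected_graph V E \<and>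
           gen_sub_ratio V (\<lambda>S. c * gfun V E S) < \<epsilon>"
proof -
  obtain m :: nat where m: "2 / \<epsilon> < real m" using reals_Archimedean2 by blast
  define n where "n = m + 3"
  have n3: "n \<ge> 3" by (simp add: n_def)
  have "2 / \<epsilon> < real n - 1" using m by (simp add: n_def)
  then have lt: "2 / (real n - 1) < \<epsilon>" using assms(1) n3
    by (simp add: field_simps)
  have sg: "simple_graph (KV n) (KE n)"
    by (auto simp: simple_graph_def KV_def KE_def)
  have cg: "connected_graph (KV n) (KE n)"
    unfolding connected_graph_def
  proof
    show "KV n \<noteq> {}" using n3 by (auto simp: KV_def)
    show "\<forall>u\<in>KV n. \<forall>v\<in>KV n. \<exists>k. is_walk (KV n) (KE n) u v k"
    proof (intro ballI)
      fix u v assume "u \<in> KV n" "v \<in> KV n"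
      then show "\<exists>k. is_walk (KV n) (KE n) u v k"
        using walk0[of u n] walk1[of u n v] by (cases "u = v") auto
    qed
  qed
  have "gen_sub_ratio (KV n) (\<lambda>S. c * gfun (KV n) (KE n) S) < \<epsilon>"
    using ratio_bound[OF n3 assms(2)] lt by linarith
  then show ?thesis using sg cg by blast
qed

end
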